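(* Let $\rho_-\in[0,2]$ and define the measure $\mathrm{d}\rho=\rho_-\,\mathrm{d}x\llcorner[0,1]+(2-\rho_-)\,\mathrm{d}x\llcorner[1,2]$ on $[0,2]$. Let $T_{\rho_-}:[0,2]\to[0,2]$ be given, for $\rho_-\in(0,2)$, by \[T_{\rho_-}(x)=\begin{cases}\dfrac{x}{\rho_-} & x\le\rho_-,\\[2mm] 2-\dfrac{2-x}{2-\rho_-} & x>\rho_-,\end{cases}\] and by $T_0(0)=1$, $T_0(x)=1+\frac x2$ for $x>0$, and $T_2(x)=\frac x2$ for $x\le 2$. Then $\rho$ is the push-forward of Lebesgue measure on $[0,2]$ under $T_{\rho_-}$, i.e. $\mathrm{d}\rho=(T_{\rho_-})_\#\mathrm{d}x$, and \[\int_{[0,2]}(T_{\rho_-}(x)-x)^2\,\mathrm{d}x\lesssim(\rho_--1)^2,\] \[\int_{[0,2]}\Big(\tfrac12(T_{\rho_-}(x)-x)+\tfrac12(T_{2-\rho_-}(x)-x)\Big)^2\,\mathrm{d}x\lesssim(\rho_--1)^4.\]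
   Context: $A\lesssim B$ means $A\le CB$ for a finite universal constant $C$ (independent of $\rho_-$). $\mathrm{d}x\llcorner[a,b]$ denotes Lebesgue measure restricted to $[a,b]$, and $T_\#\mu(A)=\mu(T^{-1}(A))$ for Borel $A$. *)

theory Defs
  imports "HOL-Analysis.Analysis"
begin

definition Tmap :: "real \<Rightarrow> real \<Rightarrow> real" where
  "Tmap r x =
     (if r = 0 then (if x = 0 then 1 else 1 + x / 2)
      else if r = 2 then x / 2
      else if x \<le> r then x / r
      else 2 - (2 - x) / (2 - r))"

definition rho_meas :: "real \<Rightarrow> real measure" where
  "rho_meas r = density lborel
     (\<lambda>x. ennreal r * indicator {0..1} x + ennreal (2 - r) * indicator {1..2} x)"

end

theory Submission imports Defs begin


lemma Tmap_meas[measurable]: "Tmap r \<in> borel_measurable borel"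
  unfolding Tmap_def by measurable

lemma int_bound:
  fixes f :: "real \<Rightarrow> real"
  assumes [measurable]: "f \<in> borel_measurable borel" and b: "\<And>x. x \<in> {0..2} \<Longrightarrow> \<bar>f x\<bar> \<le> K"
  shows "(\<integral>x\<in>{0..2::real}. f x \<partial>lborel) \<le> 2 * K"
proof -
  have c: "set_integrable lborel {0..2::real} (\<lambda>_. K)"
    by (rule borel_integrable_atLeastAtMost') (rule continuous_on_const)
  have fi: "set_integrable lborel {0..2::real} f"
    apply (rule set_integrable_bound[OF c])
    using b by (auto simp: set_borel_measurable_def intro!: AE_I2 intro: order_trans[OF _ abs_ge_self])
  have "(\<integral>x\<in>{0..2::real}. f x \<partial>lborel) \<le> (\<integral>x\<in>{0..2::real}. K \<partial>lborel)"
    using b by (intro set_integral_mono[OF fi c]) (auto simp: abs_le_iff)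
  also have "\<dots> = 2 * K"
    by (subst set_integral_const) (auto simp: measure_def)
  finally show ?thesis .
qed

lemma T_bound: assumes "r \<in> {0..2}" "x \<in> {0..2::real}" shows "\<bar>Tmap r x - x\<bar> \<le> \<bar>r - 1\<bar>"
proof -
  consider "r = 0" | "r = 2" | "0 < r" "r < 2" "x \<le> r" | "0 < r" "r < 2" "x > r" using assms by force
  then show ?thesis
  proof cases
    case 1 then show ?thesis using assms by (auto simp: Tmap_def)
  next
    case 2 then show ?thesis using assms by (auto simp: Tmap_def)
  next
    case 3
    have "Tmap r x - x = (x / r) * (1 - r)" using 3 by (auto simp: Tmap_def field_simps)
    moreover have "\<bar>x/r\<bar> \<le> 1" using 3 assms by auto
    ultimately have "\<bar>Tmap r x - x\<bar> \<le> 1 * \<bar>1 - r\<bar>" by (simp only: abs_mult) (rule mult_right_mono, auto)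
    then show ?thesis by (simp add: abs_minus_commute)
  next
    case 4
    have "Tmap r x - x = ((2 - x) / (2 - r)) * (1 - r)" using 4 by (auto simp: Tmap_def field_simps)
    moreover have "\<bar>(2 - x) / (2 - r)\<bar> \<le> 1" using 4 assms by auto
    ultimately have "\<bar>Tmap r x - x\<bar> \<le> 1 * \<bar>1 - r\<bar>" by (simp only: abs_mult) (rule mult_right_mono, auto)
    then show ?thesis by (simp add: abs_minus_commute)
  qed
qed


lemma absmul_le: "0 \<le> (a::real) \<Longrightarrow> \<bar>y\<bar> \<le> 1 \<Longrightarrow> \<bar>a * y\<bar> \<le> a"
  by (simp add: abs_mult mult_left_le)

lemma absmul_le2: "0 \<le> (a::real) \<Longrightarrow> \<bar>y\<bar> \<le> b \<Longrightarrow> \<bar>a * y\<bar> \<le> a * b"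
  by (simp add: abs_mult mult_left_mono)

definition Sf :: "real \<Rightarrow> real \<Rightarrow> real" where
  "Sf r x = (1/2) * (Tmap r x - x) + (1/2) * (Tmap (2 - r) x - x)"

lemma S_bound1: assumes "1 \<le> r" "r \<le> 2" "x \<in> {0..2::real}" shows "\<bar>Sf r x\<bar> \<le> (r - 1)^2"
proof -
  consider "r = 1" | "r = 2" | "1 < r" "r < 2" "x \<le> 2 - r" | "1 < r" "r < 2" "2 - r < x" "x \<le> r"
     | "1 < r" "r < 2" "x > r" using assms by force
  then show ?thesis
  proof cases
    case 1 then show ?thesis using assms by (auto simp: Tmap_def Sf_def)
  next
    case 2 then show ?thesis using assms by (auto simp: Tmap_def Sf_def abs_le_iff field_simps)
  next
    case 3
    have e: "Sf r x = (r - 1)^2 * (x / (r * (2 - r)))" using 3 by (auto simp: Tmap_def Sf_def field_simps power2_eq_square)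
    have "1 * (2 - r) \<le> r * (2 - r)" using 3 by (intro mult_right_mono) auto
    then have "2 - r \<le> r * (2 - r)" by (simp only: mult_1)
    then have "x \<le> r * (2 - r)" using 3 by linarith
    then have "\<bar>x / (r * (2 - r))\<bar> \<le> 1" using 3 assms by auto
    then show ?thesis unfolding e by (intro absmul_le) auto
  next
    case 4
    have e: "Sf r x = (r - 1) * ((1 - x) / r)" using 4 by (auto simp: Tmap_def Sf_def field_simps)
    have "\<bar>(1 - x) / r\<bar> = \<bar>1 - x\<bar> / r" using 4 by (simp add: abs_divide)
    also have "\<dots> \<le> \<bar>1 - x\<bar> / 1" using 4 by (intro divide_left_mono) auto
    also have "\<dots> \<le> r - 1" using 4 by (auto simp: abs_le_iff)
    finally have "\<bar>(1 - x) / r\<bar> \<le> r - 1" .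
    then have "\<bar>(r - 1) * ((1 - x) / r)\<bar> \<le> (r - 1) * (r - 1)" using 4
      by (intro absmul_le2) auto
    then show ?thesis unfolding e by (simp add: power2_eq_square)
  next
    case 5
    have e: "Sf r x = - ((r - 1)^2 * ((2 - x) / (r * (2 - r))))" using 5 by (auto simp: Tmap_def Sf_def field_simps power2_eq_square)
    have "1 * (2 - r) \<le> r * (2 - r)" using 5 by (intro mult_right_mono) auto
    then have "2 - r \<le> r * (2 - r)" by (simp only: mult_1)
    then have "2 - x \<le> r * (2 - r)" using 5 by linarith
    then have "\<bar>(2 - x) / (r * (2 - r))\<bar> \<le> 1" using 5 assms by auto
    then show ?thesis unfolding e abs_minus_cancel by (intro absmul_le) auto
  qed
qed

lemma S_bound: assumes "r \<in> {0..2}" "x \<in> {0..2::real}" shows "\<bar>Sf r x\<bar> \<le> (r - 1)^2"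
proof (cases "1 \<le> r")
  case True then show ?thesis using S_bound1 assms by auto
next
  case False
  have "\<bar>Sf (2 - r) x\<bar> \<le> (2 - r - 1)^2" using False assms by (intro S_bound1) auto
  moreover have "Sf (2 - r) x = Sf r x" by (simp add: Sf_def)
  moreover have "(2 - r - 1)^2 = (r - 1)^2" by (simp add: power2_eq_square algebra_simps)
  ultimately show ?thesis by simp
qed


definition G :: "real \<Rightarrow> real \<Rightarrow> real" where
  "G r a = r * max 0 (1 - max 0 a) + (2 - r) * max 0 (2 - max 1 a)"

lemma lb_Icc_Ioi: assumes "lo \<le> hi" shows "emeasure lborel ({lo..hi} \<inter> {a<..}) = ennreal (max 0 (hi - max lo (a::real)))"
proof -
  consider "a < lo" | "lo \<le> a" "a < hi" | "hi \<le> a" by force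
  then show ?thesis
  proof cases
    case 1
    then have "{lo..hi} \<inter> {a<..} = {lo..hi}" by auto
    then show ?thesis using 1 assms by simp
  next
    case 2
    then have "{lo..hi} \<inter> {a<..} = {a<..hi}" by auto
    then show ?thesis using 2 assms by simp
  next
    case 3
    then have "{lo..hi} \<inter> {a<..} = {}" by auto
    then show ?thesis using 3 assms by simp
  qed
qed

lemma dens_side: assumes "r \<in> {0..2}" shows "emeasure (rho_meas r) {a<..} = ennreal (G r a)"
proof -
  have "emeasure (rho_meas r) {a<..} =
     (\<integral>\<^sup>+ x. ennreal r * indicator ({0..1} \<inter> {a<..}) x + ennreal (2 - r) * indicator ({1..2} \<inter> {a<..}) x \<partial>lborel)"
    unfolding rho_meas_def
    by (subst emeasure_density) (auto intro!: nn_integral_cong split: split_indicator)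
  also have "\<dots> = ennreal r * emeasure lborel ({0..1} \<inter> {a<..}) + ennreal (2 - r) * emeasure lborel ({1..2} \<inter> {a<..})"
    by (subst nn_integral_add) (auto simp: nn_integral_cmult_indicator)
  also have "emeasure lborel ({0..1} \<inter> {a<..}) = ennreal (max 0 (1 - max 0 a))" by (rule lb_Icc_Ioi) simp
  also have "emeasure lborel ({1..2} \<inter> {a<..}) = ennreal (max 0 (2 - max 1 a))" by (rule lb_Icc_Ioi) simp
  also have "ennreal r * ennreal (max 0 (1 - max 0 a)) + ennreal (2 - r) * ennreal (max 0 (2 - max 1 a))
     = ennreal (r * max 0 (1 - max 0 a)) + ennreal ((2 - r) * max 0 (2 - max 1 a))"
    using assms by (simp add: ennreal_mult)
  also have "\<dots> = ennreal (G r a)" unfolding G_def using assms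
    by (intro ennreal_plus[symmetric]) auto
  finally show ?thesis .
qed

lemma exists_c: assumes "r \<in> {0..2}"
  obtains c where "\<And>x. x \<in> {0..2} \<Longrightarrow> (a < Tmap r x \<longleftrightarrow> c < x)" "max 0 (2 - max 0 c) = G r a"
proof -
  consider "r = 0" | "r = 2" | "0 < r" "r < 2" using assms by force
  then show ?thesis
  proof cases
    case 1
    show ?thesis
    proof (rule that[of "2 * (a - 1)"])
      fix x :: real assume "x \<in> {0..2}"
      then show "(a < Tmap r x \<longleftrightarrow> 2 * (a - 1) < x)" using 1 by (auto simp: Tmap_def)
    next
      show "max 0 (2 - max 0 (2 * (a - 1))) = G r a" using 1 unfolding G_def
        by (cases "a \<le> 1"; cases "a \<le> 2") (auto simp: max_def)
    qed
  next
    case 2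
    show ?thesis
    proof (rule that[of "2 * a"])
      fix x :: real assume "x \<in> {0..2}"
      then show "(a < Tmap r x \<longleftrightarrow> 2 * a < x)" using 2 by (auto simp: Tmap_def)
    next
      show "max 0 (2 - max 0 (2 * a)) = G r a" using 2 unfolding G_def
        by (cases "a \<le> 0"; cases "a \<le> 1") (auto simp: max_def)
    qed
  next
    case 3
    define c where "c = (if a \<le> 1 then r * a else 2 - (2 - a) * (2 - r))"
    show ?thesis
    proof (rule that[of c])
      fix x :: real assume x: "x \<in> {0..2}"
      show "(a < Tmap r x \<longleftrightarrow> c < x)"
      proof (cases "x \<le> r")
        case True
        then have T: "Tmap r x = x / r" using 3 by (simp add: Tmap_def)
        show ?thesis
        proof (cases "a \<le> 1")
          case True
          then show ?thesis unfolding T c_def using 3 by (simp add: pos_less_divide_eq mult.commute)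
        next
          case False
          have xr: "x / r \<le> 1" using `x \<le> r` 3 by simp
          have "(2 - a) * (2 - r) < 1 * (2 - r)" using False 3 by (intro mult_strict_right_mono) auto
          then have "(2 - a) * (2 - r) < 2 - r" by (simp only: mult_1)
          moreover have "c = 2 - (2 - a) * (2 - r)" unfolding c_def using False by simp
          ultimately have "r < c" by linarith
          with xr show ?thesis unfolding T using False `x \<le> r` by auto
        qed
      next
        case False
        then have T: "Tmap r x = 2 - (2 - x) / (2 - r)" using 3 by (simp add: Tmap_def)
        have q: "(2 - x) / (2 - r) < 1" using False 3 by simp
        show ?thesis
        proof (cases "a \<le> 1")
          case True
          have "r * a \<le> r * 1" using True 3 by (intro mult_left_mono) auto
          then have "r * a \<le> r" by (simp only: mult_1_right)
          moreover have "c = r * a" unfolding c_def using True by simp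
          ultimately have "c \<le> r" by linarith
          then show ?thesis unfolding T using True q False by auto
        next
          case a: False
          have "a < 2 - (2 - x) / (2 - r) \<longleftrightarrow> (2 - x) / (2 - r) < 2 - a" by auto
          also have "\<dots> \<longleftrightarrow> 2 - x < (2 - a) * (2 - r)" using 3 by (simp add: pos_divide_less_eq)
          also have "\<dots> \<longleftrightarrow> c < x" unfolding c_def using a by auto
          finally show ?thesis unfolding T .
        qed
      qed
    next
      show "max 0 (2 - max 0 c) = G r a"
      proof -
        consider "a < 0" | "0 \<le> a" "a \<le> 1" | "1 < a" "a < 2" | "2 \<le> a" by force
        then show ?thesis
        proof cases
          case 1
          have "c \<le> 0" unfolding c_def using 1 3 by (simp add: mult_nonneg_nonpos)
          then show ?thesis unfolding G_def using 1 3 by (simp add: max_def)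
        next
          case 2
          have "r * a \<le> r * 1" using 2 3 by (intro mult_left_mono) auto
          then have "r * a \<le> r" by (simp only: mult_1_right)
          moreover have "0 \<le> r * a" using 2 3 by simp
          moreover have "c = r * a" unfolding c_def using 2 by simp
          ultimately have "c = r * a" "0 \<le> r * a" "r * a \<le> 2" using 3 by linarith+
          then show ?thesis unfolding G_def using 2 3 by (simp add: max_def algebra_simps)
        next
          case 4
          have "c \<ge> 2" unfolding c_def using 4 3 by (simp add: mult_nonpos_nonneg)
          then show ?thesis unfolding G_def using 4 3 by (simp add: max_def)
        next
          case 5: 3
          have "(2 - a) * (2 - r) \<le> 1 * 2" using 5 3 by (intro mult_mono) auto
          then have "c = 2 - (2 - a) * (2 - r)" "0 \<le> c" "c \<le> 2" unfolding c_def using 5 3 by auto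
          then show ?thesis unfolding G_def using 5 3 by (simp add: max_def algebra_simps)
        qed
      qed
    qed
  qed
qed

lemma distr_side: assumes "r \<in> {0..2}"
  shows "emeasure (distr (restrict_space lborel {0..2::real}) lborel (Tmap r)) {a<..} = ennreal (G r a)"
proof -
  obtain c where c: "\<And>x. x \<in> {0..2} \<Longrightarrow> (a < Tmap r x \<longleftrightarrow> c < x)" "max 0 (2 - max 0 c) = G r a"
    using exists_c[OF assms] by blast
  have m: "Tmap r \<in> measurable (restrict_space lborel {0..2::real}) lborel"
    by (rule measurable_restrict_space1) simp
  have "emeasure (distr (restrict_space lborel {0..2::real}) lborel (Tmap r)) {a<..}
      = emeasure (restrict_space lborel {0..2::real}) (Tmap r -` {a<..} \<inter> {0..2})"
    by (subst emeasure_distr[OF m]) auto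
  also have "Tmap r -` {a<..} \<inter> {0..2} = {0..2} \<inter> {c<..}" using c(1) by auto
  also have "emeasure (restrict_space lborel {0..2::real}) ({0..2} \<inter> {c<..}) = emeasure lborel ({0..2} \<inter> {c<..})"
    by (subst emeasure_restrict_space) auto
  also have "\<dots> = ennreal (G r a)" using c(2) by (simp add: lb_Icc_Ioi)
  finally show ?thesis .
qed

lemma push: assumes "r \<in> {0..2}"
  shows "rho_meas r = distr (restrict_space lborel {0..2::real}) lborel (Tmap r)"
proof (rule sym, rule measure_eqI_lessThan)
  show "emeasure (distr (restrict_space lborel {0..2::real}) lborel (Tmap r)) {x<..} < \<infinity>" for x
    using distr_side[OF assms] by simp
  show "emeasure (distr (restrict_space lborel {0..2::real}) lborel (Tmap r)) {x<..} = emeasure (rho_meas r) {x<..}" for x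
    using distr_side[OF assms] dens_side[OF assms] by simp
qed (auto simp: rho_meas_def)


theorem lemma2p2:
  shows "(\<forall>r\<in>{0..2::real}.
            rho_meas r = distr (restrict_space lborel {0..2::real}) lborel (Tmap r))
       \<and> (\<exists>C::real. \<forall>r\<in>{0..2::real}.
            (\<integral>x\<in>{0..2::real}. (Tmap r x - x)^2 \<partial>lborel) \<le> C * (r - 1)^2
          \<and> (\<integral>x\<in>{0..2::real}. ((1/2) * (Tmap r x - x) + (1/2) * (Tmap (2 - r) x - x))^2 \<partial>lborel)
               \<le> C * (r - 1)^4)"
proof (intro conjI ballI exI[of _ 2])
  fix r :: real assume r: "r \<in> {0..2}"
  show "rho_meas r = distr (restrict_space lborel {0..2::real}) lborel (Tmap r)" by (rule push[OF r])
  show "(\<integral>x\<in>{0..2::real}. (Tmap r x - x)^2 \<partial>lborel) \<le> 2 * (r - 1)^2"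
  proof (rule int_bound)
    show "(\<lambda>x. (Tmap r x - x)^2) \<in> borel_measurable borel" by measurable
    fix x :: real assume x: "x \<in> {0..2}"
    have "\<bar>Tmap r x - x\<bar> \<le> \<bar>r - 1\<bar>" by (rule T_bound[OF r x])
    then show "\<bar>(Tmap r x - x)^2\<bar> \<le> (r - 1)^2" by (simp add: abs_le_square_iff)
  qed
  have "(\<integral>x\<in>{0..2::real}. ((1/2) * (Tmap r x - x) + (1/2) * (Tmap (2 - r) x - x))^2 \<partial>lborel)
     = (\<integral>x\<in>{0..2::real}. (Sf r x)^2 \<partial>lborel)" by (simp add: Sf_def)
  also have "\<dots> \<le> 2 * ((r - 1)^2)^2"
  proof (rule int_bound)
    show "(\<lambda>x. (Sf r x)^2) \<in> borel_measurable borel" unfolding Sf_def by measurable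
    fix x :: real assume x: "x \<in> {0..2}"
    have "\<bar>Sf r x\<bar> \<le> \<bar>(r - 1)^2\<bar>" using S_bound[OF r x] by simp
    then have h: "(Sf r x)^2 \<le> ((r - 1)^2)^2" using abs_le_square_iff[of "Sf r x" "(r - 1)^2"] by blast
    show "\<bar>(Sf r x)^2\<bar> \<le> ((r - 1)^2)^2" using h by (subst abs_of_nonneg) auto
  qed
  also have "\<dots> = 2 * (r - 1)^4" by simp
  finally show "(\<integral>x\<in>{0..2::real}. ((1/2) * (Tmap r x - x) + (1/2) * (Tmap (2 - r) x - x))^2 \<partial>lborel)
     \<le> 2 * (r - 1)^4" .
qed

end
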